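(* Let $V:\mathbb R^3\to\mathbb R$ be in $L^\infty_{loc}(\mathbb R^3)$ with $\operatorname{ess\,inf}V>0$, let $\varepsilon>0$, and assume $W_\varepsilon$ embeds compactly into $L^p(\mathbb R^3)$ for every $p\in(2,6)$. Let $f:\mathbb R\to\mathbb R$ be continuous, satisfying either ($f(u)\ge0$ for $u\ge0$ and $f(u)=0$ for $u\le0$) or ($f$ odd and $f(u)\ge0$ for $u\ge0$), and such that there is $q\in(2,6)$ with $\lim_{u\to\infty}f(u)/u^{q-1}=0$ and $\lim_{u\to0}f(u)/u=0$. Then $$\mathfrak m_\varepsilon:=\inf_{u\in\mathcal M_\varepsilon}I_\varepsilon(u)>0.$$
   Context: $F(t)=\int_0^tf(s)\,ds$. $W_\varepsilon:=\{u\in H^1(\mathbb R^3):\int_{\mathbb R^3}V(\varepsilon x)u^2<\infty\}$ with norm $\|u\|_{W_\varepsilon}^2=\int|\nabla u|^2+\int V(\varepsilon x)u^2$. For $u\in H^1(\mathbb R^3)$, $\phi_u(x)=\int_{\mathbb R^3}\frac{1-e^{-|x-y|}}{|x-y|}u^2(y)\,dy$; $\mathcal M_\varepsilon=\{u\in W_\varepsilon:\int\phi_uu^2=1\}$ and $I_\varepsilon(u)=\frac12\|u\|_{W_\varepsilon}^2+\int_{\mathbb R^3}F(u)$. *)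

theory Defs
  imports "HOL-Analysis.Analysis"
begin

type_synonym R3 = "real ^ 3"

definition partial :: "3 \<Rightarrow> (R3 \<Rightarrow> real) \<Rightarrow> R3 \<Rightarrow> real" where
  "partial i \<phi> x = frechet_derivative \<phi> (at x) (axis i 1)"

coinductive_set smooth :: "(R3 \<Rightarrow> real) set" where
  "(\<forall>x. \<phi> differentiable (at x)) \<Longrightarrow> (\<forall>i. partial i \<phi> \<in> smooth) \<Longrightarrow> \<phi> \<in> smooth"

definition test_fun :: "(R3 \<Rightarrow> real) \<Rightarrow> bool" where
  "test_fun \<phi> \<longleftrightarrow> \<phi> \<in> smooth \<and> compact (closure {x. \<phi> x \<noteq> 0})"

definition L2 :: "(R3 \<Rightarrow> real) \<Rightarrow> bool" where
  "L2 u \<longleftrightarrow> u \<in> borel_measurable lebesgue \<and> integrable lebesgue (\<lambda>x. (u x)\<^sup>2)"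

definition Lp :: "real \<Rightarrow> (R3 \<Rightarrow> real) \<Rightarrow> bool" where
  "Lp p u \<longleftrightarrow> u \<in> borel_measurable lebesgue \<and> integrable lebesgue (\<lambda>x. \<bar>u x\<bar> powr p)"

definition weak_partial :: "(R3 \<Rightarrow> real) \<Rightarrow> 3 \<Rightarrow> (R3 \<Rightarrow> real) \<Rightarrow> bool" where
  "weak_partial u i g \<longleftrightarrow> (\<forall>\<phi>. test_fun \<phi> \<longrightarrow>
     (\<integral>x. u x * partial i \<phi> x \<partial>lebesgue) = - (\<integral>x. g x * \<phi> x \<partial>lebesgue))"

definition H1 :: "(R3 \<Rightarrow> real) set" where
  "H1 = {u. L2 u \<and> (\<forall>i. \<exists>g. L2 g \<and> weak_partial u i g)}"

definition wgrad :: "(R3 \<Rightarrow> real) \<Rightarrow> 3 \<Rightarrow> R3 \<Rightarrow> real" where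
  "wgrad u i = (SOME g. L2 g \<and> weak_partial u i g)"

definition grad_sq :: "(R3 \<Rightarrow> real) \<Rightarrow> real" where
  "grad_sq u = (\<Sum>i\<in>UNIV. \<integral>x. (wgrad u i x)\<^sup>2 \<partial>lebesgue)"

definition W :: "(R3 \<Rightarrow> real) \<Rightarrow> real \<Rightarrow> (R3 \<Rightarrow> real) set" where
  "W V \<epsilon> = {u \<in> H1. integrable lebesgue (\<lambda>x. V (\<epsilon> *\<^sub>R x) * (u x)\<^sup>2)}"

definition W_norm_sq :: "(R3 \<Rightarrow> real) \<Rightarrow> real \<Rightarrow> (R3 \<Rightarrow> real) \<Rightarrow> real" where
  "W_norm_sq V \<epsilon> u = grad_sq u + (\<integral>x. V (\<epsilon> *\<^sub>R x) * (u x)\<^sup>2 \<partial>lebesgue)"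

definition phi :: "(R3 \<Rightarrow> real) \<Rightarrow> R3 \<Rightarrow> real" where
  "phi u x = (\<integral>y. (1 - exp (- dist x y)) / dist x y * (u y)\<^sup>2 \<partial>lebesgue)"

definition Mset :: "(R3 \<Rightarrow> real) \<Rightarrow> real \<Rightarrow> (R3 \<Rightarrow> real) set" where
  "Mset V \<epsilon> = {u \<in> W V \<epsilon>. (\<integral>x. phi u x * (u x)\<^sup>2 \<partial>lebesgue) = 1}"

definition primitive :: "(real \<Rightarrow> real) \<Rightarrow> real \<Rightarrow> real" where
  "primitive f t = (LBINT s=0..t. f s)"

definition I_eps :: "(R3 \<Rightarrow> real) \<Rightarrow> real \<Rightarrow> (real \<Rightarrow> real) \<Rightarrow> (R3 \<Rightarrow> real) \<Rightarrow> real" where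
  "I_eps V \<epsilon> f u = W_norm_sq V \<epsilon> u / 2 + (\<integral>x. primitive f (u x) \<partial>lebesgue)"

definition Linf_loc :: "(R3 \<Rightarrow> real) \<Rightarrow> bool" where
  "Linf_loc V \<longleftrightarrow> V \<in> borel_measurable lebesgue \<and>
     (\<forall>K. compact K \<longrightarrow> (\<exists>C. AE x in lebesgue. x \<in> K \<longrightarrow> \<bar>V x\<bar> \<le> C))"

definition compact_embed :: "(R3 \<Rightarrow> real) \<Rightarrow> real \<Rightarrow> real \<Rightarrow> bool" where
  "compact_embed V \<epsilon> p \<longleftrightarrow> (\<forall>u :: nat \<Rightarrow> R3 \<Rightarrow> real.
     (\<forall>n. u n \<in> W V \<epsilon>) \<and> (\<exists>B. \<forall>n. W_norm_sq V \<epsilon> (u n) \<le> B) \<longrightarrow>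
     (\<exists>r v. strict_mono r \<and> Lp p v \<and>
        (\<lambda>n. \<integral>x. \<bar>u (r n) x - v x\<bar> powr p \<partial>lebesgue) \<longlonglongrightarrow> 0))"

end

theory Submission
  imports Defs
begin

lemma primitive_nonneg:
  fixes f :: "real \<Rightarrow> real"
  assumes "(\<forall>u\<ge>0. f u \<ge> 0) \<and> (\<forall>u\<le>0. f u = 0) \<or> (\<forall>u. f (- u) = - f u) \<and> (\<forall>u\<ge>0. f u \<ge> 0)"
  shows "primitive f t \<ge> 0"
proof (cases "t \<ge> 0")
  case True
  have npos: "\<forall>u\<ge>0. f u \<ge> 0" using assms by blast
  have "(LBINT s=0..t. f s) = (LBINT s : {0..t}. f s)"
    using interval_integral_Icc[of 0 t f] True by (simp add: zero_ereal_def)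
  also have "\<dots> \<ge> 0" unfolding set_lebesgue_integral_def
    by (rule integral_nonneg_AE) (simp add: indicator_def npos)
  finally show ?thesis unfolding primitive_def .
next
  case False
  have nneg: "\<forall>u\<le>0. f u \<le> 0"
  proof (intro allI impI)
    fix u :: real assume u: "u \<le> 0"
    show "f u \<le> 0" using assms
    proof
      assume h: "(\<forall>u\<ge>0. f u \<ge> 0) \<and> (\<forall>u\<le>0. f u = 0)"
      then show ?thesis using u by simp
    next
      assume h: "(\<forall>u. f (- u) = - f u) \<and> (\<forall>u\<ge>0. f u \<ge> 0)"
      have e1: "f (- u) = - f u" using h by blast
      have h2: "\<forall>v\<ge>0. 0 \<le> f v" using h by blast
      have e2: "f (- u) \<ge> 0" using h2 u by simp
      note e1 e2
      then show ?thesis by linarith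
    qed
  qed
  have "(LBINT s=t..0. f s) = (LBINT s : {t..0}. f s)"
    using interval_integral_Icc[of t 0 f] False by (simp add: zero_ereal_def)
  also have "\<dots> \<le> 0" unfolding set_lebesgue_integral_def
  proof -
    have "0 \<le> (\<integral>x. - (indicator {t..0} x *\<^sub>R f x) \<partial>lborel)"
      by (rule integral_nonneg_AE) (simp add: indicator_def nneg)
    then show "(\<integral>x. indicator {t..0} x *\<^sub>R f x \<partial>lborel) \<le> 0" by simp
  qed
  finally have "(LBINT s=t..0. f s) \<le> 0" .
  then show ?thesis unfolding primitive_def
    by (subst interval_integral_endpoints_reverse) simp
qed

lemma phi_bound:
  assumes "L2 u"
  shows "phi u x \<le> (\<integral>y. (u y)\<^sup>2 \<partial>lebesgue)" and "0 \<le> phi u x"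
proof -
  have iu: "integrable lebesgue (\<lambda>y. (u y)\<^sup>2)" using assms unfolding L2_def by blast
  have k: "0 \<le> (1 - exp (- dist x y)) / dist x y \<and> (1 - exp (- dist x y)) / dist x y \<le> 1" for y
  proof (cases "dist x y = 0")
    case True then show ?thesis by simp
  next
    case False
    then have d: "dist x y > 0" by simp
    have "1 - exp (- dist x y) \<le> dist x y"
      using exp_ge_add_one_self[of "- dist x y"] by simp
    moreover have "0 \<le> 1 - exp (- dist x y)" using d by simp
    ultimately show ?thesis using d by (simp add: divide_le_eq_1)
  qed
  show "0 \<le> phi u x" unfolding phi_def
    by (rule integral_nonneg_AE) (auto intro!: mult_nonneg_nonneg simp: k)
  show "phi u x \<le> (\<integral>y. (u y)\<^sup>2 \<partial>lebesgue)"
  proof (cases "integrable lebesgue (\<lambda>y. (1 - exp (- dist x y)) / dist x y * (u y)\<^sup>2)")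
    case True
    show ?thesis unfolding phi_def
      by (rule integral_mono[OF True iu]) (metis k mult_left_le_one_le zero_le_power2)
  next
    case False
    then show ?thesis unfolding phi_def
      by (simp add: not_integrable_integral_eq integral_nonneg_AE)
  qed
qed

lemma norm_sq_ge1:
  assumes "L2 u" and "(\<integral>x. phi u x * (u x)\<^sup>2 \<partial>lebesgue) = 1"
  shows "1 \<le> (\<integral>y. (u y)\<^sup>2 \<partial>lebesgue)"
proof -
  define A where "A = (\<integral>y. (u y)\<^sup>2 \<partial>lebesgue)"
  have iu: "integrable lebesgue (\<lambda>y. (u y)\<^sup>2)" using assms unfolding L2_def by blast
  have A0: "0 \<le> A" unfolding A_def by (rule integral_nonneg_AE) auto
  have int: "integrable lebesgue (\<lambda>x. phi u x * (u x)\<^sup>2)"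
    using assms(2) not_integrable_integral_eq by fastforce
  have "1 \<le> (\<integral>x. A * (u x)\<^sup>2 \<partial>lebesgue)"
    unfolding assms(2)[symmetric]
    by (rule integral_mono[OF int]) (auto intro!: mult_right_mono phi_bound(1)[OF assms(1), unfolded A_def[symmetric]] iu)
  also have "\<dots> = A * A" unfolding A_def by simp
  finally have "1 \<le> A * A" .
  show ?thesis unfolding A_def[symmetric]
  proof (rule ccontr)
    assume "\<not> 1 \<le> A"
    then have "A * A \<le> 1 * A" using A0 by (intro mult_right_mono) auto
    then show False using \<open>1 \<le> A * A\<close> \<open>\<not> 1 \<le> A\<close> by linarith
  qed
qed

lemma AE_scaled:
  assumes "AE x in lebesgue. c \<le> V x" and "\<epsilon> > 0"
  shows "AE x in lebesgue. c \<le> V (\<epsilon> *\<^sub>R (x::R3))"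
proof -
  have "\<exists>N\<in>null_sets lebesgue. {x \<in> space lebesgue. \<not> c \<le> V x} \<subseteq> N"
    using assms(1) by (simp only: eventually_ae_filter)
  then obtain N where N: "{x. \<not> c \<le> V x} \<subseteq> N" "N \<in> null_sets lebesgue"
    by auto
  have "negligible ((\<lambda>x. inverse \<epsilon> *\<^sub>R x) ` N)"
    by (rule negligible_differentiable_image_negligible)
       (auto simp: negligible_iff_null_sets N intro!: derivative_intros)
  then have nn: "(\<lambda>x. inverse \<epsilon> *\<^sub>R x) ` N \<in> null_sets lebesgue"
    by (simp add: negligible_iff_null_sets)
  have "{x. \<not> c \<le> V (\<epsilon> *\<^sub>R x)} \<subseteq> (\<lambda>x. inverse \<epsilon> *\<^sub>R x) ` N"
  proof
    fix x assume "x \<in> {x. \<not> c \<le> V (\<epsilon> *\<^sub>R x)}"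
    then have "\<epsilon> *\<^sub>R x \<in> N" using N(1) by blast
    moreover have "x = inverse \<epsilon> *\<^sub>R (\<epsilon> *\<^sub>R x)" using assms(2) by simp
    ultimately show "x \<in> (\<lambda>x. inverse \<epsilon> *\<^sub>R x) ` N" by blast
  qed
  then show ?thesis by (intro AE_I'[OF nn]) simp
qed

theorem lemma2p7:
  fixes V :: "R3 \<Rightarrow> real" and \<epsilon> :: real and f :: "real \<Rightarrow> real" and q :: real
  assumes "Linf_loc V"
    and "\<exists>c>0. AE x in lebesgue. c \<le> V x"
    and "\<epsilon> > 0"
    and "\<forall>p. 2 < p \<and> p < 6 \<longrightarrow> compact_embed V \<epsilon> p"
    and "continuous_on UNIV f"
    and "(\<forall>u\<ge>0. f u \<ge> 0) \<and> (\<forall>u\<le>0. f u = 0) \<or> (\<forall>u. f (- u) = - f u) \<and> (\<forall>u\<ge>0. f u \<ge> 0)"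
    and "2 < q" and "q < 6"
    and "((\<lambda>u. f u / u powr (q - 1)) \<longlongrightarrow> 0) at_top"
    and "((\<lambda>u. f u / u) \<longlongrightarrow> 0) (at 0)"
  shows "(INF u\<in>Mset V \<epsilon>. ereal (I_eps V \<epsilon> f u)) > 0"
proof -
  obtain c where c: "c > 0" "AE x in lebesgue. c \<le> V x" using assms(2) by blast
  have AEs: "AE x in lebesgue. c \<le> V (\<epsilon> *\<^sub>R x)" by (rule AE_scaled[OF c(2) assms(3)])
  have bound: "c / 2 \<le> I_eps V \<epsilon> f u" if u: "u \<in> Mset V \<epsilon>" for u
  proof -
    have L2: "L2 u" and iV: "integrable lebesgue (\<lambda>x. V (\<epsilon> *\<^sub>R x) * (u x)\<^sup>2)"
      and M: "(\<integral>x. phi u x * (u x)\<^sup>2 \<partial>lebesgue) = 1"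
      using u unfolding Mset_def W_def H1_def by auto
    have iu: "integrable lebesgue (\<lambda>y. (u y)\<^sup>2)" using L2 unfolding L2_def by blast
    have g: "0 \<le> grad_sq u" unfolding grad_sq_def
      by (intro sum_nonneg integral_nonneg_AE) auto
    have "c \<le> c * (\<integral>y. (u y)\<^sup>2 \<partial>lebesgue)"
      using norm_sq_ge1[OF L2 M] c(1) by simp
    also have "\<dots> = (\<integral>y. c * (u y)\<^sup>2 \<partial>lebesgue)" by simp
    also have "\<dots> \<le> (\<integral>x. V (\<epsilon> *\<^sub>R x) * (u x)\<^sup>2 \<partial>lebesgue)"
    proof (rule integral_mono_AE[OF _ iV])
      show "integrable lebesgue (\<lambda>y. c * (u y)\<^sup>2)" using iu by simp
      show "AE x in lebesgue. c * (u x)\<^sup>2 \<le> V (\<epsilon> *\<^sub>R x) * (u x)\<^sup>2"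
        using AEs by eventually_elim (simp add: mult_right_mono)
    qed
    finally have "c \<le> W_norm_sq V \<epsilon> u" unfolding W_norm_sq_def using g by linarith
    moreover have "0 \<le> (\<integral>x. primitive f (u x) \<partial>lebesgue)"
      by (rule integral_nonneg_AE) (auto intro!: primitive_nonneg[OF assms(6)])
    ultimately show ?thesis unfolding I_eps_def by linarith
  qed
  have "ereal (c / 2) \<le> (INF u\<in>Mset V \<epsilon>. ereal (I_eps V \<epsilon> f u))"
    by (rule INF_greatest) (subst ereal_less_eq(3), rule bound)
  moreover have "0 < ereal (c / 2)" using c(1) by simp
  ultimately show ?thesis by (rule less_le_trans[rotated])
qed

end
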